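(* Let $X$ be a transitive BE-algebra, $k\in(-1,0]$, and $(X,f)$ an $([e],[e]\vee[c_k])$-ideal of $X$ such that $f(1)>\tfrac{-k-1}{2}$. Then $(X,f)$ is an $N$-ideal of $X$.
   Context: A BE-algebra is a set $X$ with a binary operation $*$ and a distinguished element $1$ such that for all $x,y,z\in X$: $x*x=1$, $x*1=1$, $1*x=x$, and $x*(y*z)=y*(x*z)$. Write $x\le y$ iff $x*y=1$. A BE-algebra is transitive if $y*z\le(x*y)*(x*z)$ for all $x,y,z\in X$. An ideal of $X$ is a nonempty subset $I\subseteq X$ such that $x*s\in I$ for all $x\in X$, $s\in I$, and $(s*(q*x))*x\in I$ for all $x\in X$ and $s,q\in I$. An $N$-structure on $X$ is a pair $(X,f)$ where $f:X\to[-1,0]$ is any function. For $t\in[-1,0]$ let $C(f;t)=\{x\in X: f(x)\le t\}$. The $N$-structure $(X,f)$ is an $N$-ideal of $X$ if for every $t\in[-1,0]$ the set $C(f;t)$ is either empty or an ideal of $X$. Fix $k\in(-1,0]$. For $x\in X$ and $t\in[-1,0)$, write $\frac{x}{t}[e]f$ if $f(x)\le t$, and $\frac{x}{t}[c_k]f$ if $f(x)+t+k+1<0$; write $\frac{x}{t}([e]\vee[c_k])f$ if at least one of these holds. The $N$-structure $(X,f)$ is an $([e],[e]\vee[c_k])$-ideal of $X$ if for all $x,y,z\in X$ and all $t,r\in[-1,0)$: (i) $f(y)\le t$ implies $\frac{x*y}{t}([e]\vee[c_k])f$; (ii) $f(x)\le t$ and $f(y)\le r$ together imply $\frac{(x*(y*z))*z}{\max\{t,r\}}([e]\vee[c_k])f$.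 *)

theory Defs
  imports Complex_Main
begin

definition BE_algebra :: "('a \<Rightarrow> 'a \<Rightarrow> 'a) \<Rightarrow> 'a \<Rightarrow> bool" where
  "BE_algebra star one \<longleftrightarrow>
     (\<forall>x. star x x = one) \<and> (\<forall>x. star x one = one) \<and> (\<forall>x. star one x = x) \<and>
     (\<forall>x y z. star x (star y z) = star y (star x z))"

definition BE_le :: "('a \<Rightarrow> 'a \<Rightarrow> 'a) \<Rightarrow> 'a \<Rightarrow> 'a \<Rightarrow> 'a \<Rightarrow> bool" where
  "BE_le star one x y \<longleftrightarrow> star x y = one"

definition BE_transitive :: "('a \<Rightarrow> 'a \<Rightarrow> 'a) \<Rightarrow> 'a \<Rightarrow> bool" where
  "BE_transitive star one \<longleftrightarrow>
     (\<forall>x y z. BE_le star one (star y z) (star (star x y) (star x z)))"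

definition BE_ideal :: "('a \<Rightarrow> 'a \<Rightarrow> 'a) \<Rightarrow> 'a set \<Rightarrow> bool" where
  "BE_ideal star I \<longleftrightarrow> I \<noteq> {} \<and>
     (\<forall>x. \<forall>s\<in>I. star x s \<in> I) \<and>
     (\<forall>x. \<forall>s\<in>I. \<forall>q\<in>I. star (star s (star q x)) x \<in> I)"

definition N_structure :: "('a \<Rightarrow> real) \<Rightarrow> bool" where
  "N_structure f \<longleftrightarrow> (\<forall>x. f x \<in> {-1..0})"

definition Ccut :: "('a \<Rightarrow> real) \<Rightarrow> real \<Rightarrow> 'a set" where
  "Ccut f t = {x. f x \<le> t}"

definition N_ideal :: "('a \<Rightarrow> 'a \<Rightarrow> 'a) \<Rightarrow> ('a \<Rightarrow> real) \<Rightarrow> bool" where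
  "N_ideal star f \<longleftrightarrow> N_structure f \<and>
     (\<forall>t\<in>{-1..0}. Ccut f t = {} \<or> BE_ideal star (Ccut f t))"

definition pt_e :: "('a \<Rightarrow> real) \<Rightarrow> 'a \<Rightarrow> real \<Rightarrow> bool" where
  "pt_e f x t \<longleftrightarrow> f x \<le> t"

definition pt_ck :: "real \<Rightarrow> ('a \<Rightarrow> real) \<Rightarrow> 'a \<Rightarrow> real \<Rightarrow> bool" where
  "pt_ck k f x t \<longleftrightarrow> f x + t + k + 1 < 0"

definition pt_e_or_ck :: "real \<Rightarrow> ('a \<Rightarrow> real) \<Rightarrow> 'a \<Rightarrow> real \<Rightarrow> bool" where
  "pt_e_or_ck k f x t \<longleftrightarrow> pt_e f x t \<or> pt_ck k f x t"

definition e_eck_ideal :: "('a \<Rightarrow> 'a \<Rightarrow> 'a) \<Rightarrow> real \<Rightarrow> ('a \<Rightarrow> real) \<Rightarrow> bool" where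
  "e_eck_ideal star k f \<longleftrightarrow> N_structure f \<and>
     (\<forall>x y z. \<forall>t\<in>{-1..<0}. \<forall>r\<in>{-1..<0}.
        (f y \<le> t \<longrightarrow> pt_e_or_ck k f (star x y) t) \<and>
        (f x \<le> t \<and> f y \<le> r \<longrightarrow> pt_e_or_ck k f (star (star x (star y z)) z) (max t r)))"

end

theory Submission
  imports Defs
begin

lemma keyL:
  fixes k t a :: real
  assumes "k \<in> {-1<..0}" "t \<in> {-1..<0}" "a > (- k - 1) / 2"
    and "\<And>t'. t' \<in> {-1..<0} \<Longrightarrow> t \<le> t' \<Longrightarrow> a \<le> t' \<or> a + t' + k + 1 < 0"
  shows "a \<le> t"
proof (rule ccontr)
  assume "\<not> a \<le> t"
  define t' where "t' = max t (- a - k - 1)"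
  have "t' \<in> {-1..<0}" "t \<le> t'" using assms \<open>\<not> a \<le> t\<close> by (auto simp: t'_def)
  hence "a \<le> t' \<or> a + t' + k + 1 < 0" using assms(4) by blast
  moreover have "t' < a" "a + t' + k + 1 \<ge> 0" using assms \<open>\<not> a \<le> t\<close> by (auto simp: t'_def)
  ultimately show False by linarith
qed

theorem mainTheorem10:
  fixes star :: "'a \<Rightarrow> 'a \<Rightarrow> 'a" and one :: 'a and f :: "'a \<Rightarrow> real" and k :: real
  assumes "BE_algebra star one"
    and "BE_transitive star one"
    and "k \<in> {-1<..0}"
    and "e_eck_ideal star k f"
    and "f one > (- k - 1) / 2"
  shows "N_ideal star f"
proof -
  have NS: "\<And>x. f x \<in> {-1..0}" using assms(4) by (auto simp: e_eck_ideal_def N_structure_def)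
  have I1: "\<And>x y t. t \<in> {-1..<0} \<Longrightarrow> f y \<le> t \<Longrightarrow> f (star x y) \<le> t \<or> f (star x y) + t + k + 1 < 0"
    using assms(4) by (auto simp: e_eck_ideal_def pt_e_or_ck_def pt_e_def pt_ck_def)
  have I2: "\<And>x y z t r. t \<in> {-1..<0} \<Longrightarrow> r \<in> {-1..<0} \<Longrightarrow> f x \<le> t \<Longrightarrow> f y \<le> r \<Longrightarrow>
      f (star (star x (star y z)) z) \<le> max t r \<or> f (star (star x (star y z)) z) + max t r + k + 1 < 0"
    using assms(4) unfolding e_eck_ideal_def pt_e_or_ck_def pt_e_def pt_ck_def by blast
  have xx: "\<And>x. star x x = one" using assms(1) by (simp add: BE_algebra_def)
  have minf: "f one \<le> f y" for y
  proof (rule ccontr)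
    assume "\<not> f one \<le> f y"
    hence "f y \<in> {-1..<0}" using NS[of y] NS[of one] by auto
    have "f one \<le> f y"
      apply (rule keyL[OF assms(3) \<open>f y \<in> {-1..<0}\<close> assms(5)])
      using I1[of _ y y] xx by auto
    thus False using \<open>\<not> f one \<le> f y\<close> by simp
  qed
  have big: "\<And>w. f w > (- k - 1) / 2" using minf assms(5) by (meson less_le_trans)
  show ?thesis unfolding N_ideal_def
  proof (intro conjI ballI)
    show "N_structure f" using assms(4) by (simp add: e_eck_ideal_def)
  next
    fix t assume t: "t \<in> {-1..(0::real)}"
    show "Ccut f t = {} \<or> BE_ideal star (Ccut f t)"
    proof (cases "t = 0")
      case True
      then have "Ccut f t = UNIV" using NS by (auto simp: Ccut_def)
      then show ?thesis by (simp add: BE_ideal_def)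
    next
      case False
      hence t0: "t \<in> {-1..<0}" using t by auto
      show ?thesis
      proof (cases "Ccut f t = {}")
        case True thus ?thesis by simp
      next
        case False
        have A: "star x s \<in> Ccut f t" if "s \<in> Ccut f t" for x s
        proof -
          have "f (star x s) \<le> t"
            apply (rule keyL[OF assms(3) t0 big])
            using I1[of _ s x] that by (auto simp: Ccut_def)
          thus ?thesis by (simp add: Ccut_def)
        qed
        have B: "star (star s (star q x)) x \<in> Ccut f t" if "s \<in> Ccut f t" "q \<in> Ccut f t" for x s q
        proof -
          have "f (star (star s (star q x)) x) \<le> t"
            apply (rule keyL[OF assms(3) t0 big])
            using I2[of _ _ s q x] that by (fastforce simp: Ccut_def)
          thus ?thesis by (simp add: Ccut_def)
        qed
        show ?thesis using False A B by (simp add: BE_ideal_def)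
      qed
    qed
  qed
qed

end
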